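(* Let $\tau=\{1-t^2+2it:\ t\in\mathbb{R}\}$ (a parabola). Then: (1) $A\mapsto\zeta_+(A)$ is a conformal mapping of $\mathbb{C}_+=\{\Im A>0\}$ onto the domain in $\mathbb{C}_+$ bounded by the ray $[1,+\infty)$ and by $\tau\cap\mathbb{C}_+$; under this mapping the boundary part $[-1,+\infty)$ corresponds to $[1,+\infty)$ and $(-\infty,-1)$ corresponds to $\tau\cap\mathbb{C}_+$. (2) $A\mapsto\zeta_-(A)$ is a conformal mapping of $\mathbb{C}_+$ onto the domain in $\mathbb{C}$ bounded by the ray $[0,+\infty)$ and by $\tau\cap\mathbb{C}_-$ (where $\mathbb{C}_-=\{\Im z<0\}$); under this mapping the boundary part $(0,+\infty)$ corresponds to itself, the interval $[-1,0]$ corresponds to $[0,1]$, and $(-\infty,0)$ corresponds to $\tau\cap\mathbb{C}_-$. Moreover, the pre-image of the negative real axis $(-\infty,0)$ under $\zeta_-$ is the parabola in the upper $A$-half-plane given parametrically by $\{-t^2+2it:\ t\ge0\}$.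
   Context: For $A$ with $\Im A\ge 0$, $\zeta_\pm(A)=A+2\pm2\sqrt{A+1}=(1\pm\sqrt{A+1})^2$, where $\sqrt{\cdot}$ is the principal branch of the square root. Boundary correspondences are understood in the sense of the continuous extension of the maps to the boundary. *)

theory Defs
  imports "HOL-Complex_Analysis.Complex_Analysis"
begin

definition zeta_plus :: "complex \<Rightarrow> complex" where
  "zeta_plus A = A + 2 + 2 * csqrt (A + 1)"

definition zeta_minus :: "complex \<Rightarrow> complex" where
  "zeta_minus A = A + 2 - 2 * csqrt (A + 1)"

definition upper_hp :: "complex set" where
  "upper_hp = {z. Im z > 0}"

definition lower_hp :: "complex set" where
  "lower_hp = {z. Im z < 0}"

definition closed_upper_hp :: "complex set" where
  "closed_upper_hp = {z. Im z \<ge> 0}"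

definition tau :: "complex set" where
  "tau = range (\<lambda>t::real. 1 - (complex_of_real t)^2 + 2 * \<i> * complex_of_real t)"

text \<open>The domain in C_+ bounded by the ray [1,+inf) and tau \<inter> C_+.\<close>
definition dom_plus :: "complex set" where
  "dom_plus = {z. Im z > 0 \<and> Re z > 1 - (Im z)^2 / 4}"

text \<open>The domain in C bounded by the ray [0,+inf) and tau \<inter> C_-:
  the complement of the ray together with the closed region enclosed by
  the lower half of the parabola.\<close>
definition dom_minus :: "complex set" where
  "dom_minus = - (complex_of_real ` {0..} \<union> {z. Im z \<le> 0 \<and> Re z \<ge> 1 - (Im z)^2 / 4})"

end

theory Submission
  imports Defs
begin


lemma ofreal_img: "complex_of_real ` S = {z. Im z = 0 \<and> Re z \<in> S}"
  by (auto simp: image_iff complex_eq_iff intro!: exI[of _ "Re z" for z])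

lemma sq_Re: "Re (z^2) = (Re z)^2 - (Im z)^2"
  by (simp add: power2_eq_square)
lemma sq_Im: "Im (z^2) = 2 * Re z * Im z"
  by (simp add: power2_eq_square)

lemma csqrt_upper:
  assumes "Im A > 0"
  shows "Re (csqrt (A+1)) > 0" "Im (csqrt (A+1)) > 0"
proof -
  let ?w = "csqrt (A+1)"
  have sq: "?w^2 = A + 1" by simp
  have "Im (?w^2) > 0" using assms sq by (simp del: csqrt.simps)
  hence p: "Re ?w * Im ?w > 0" unfolding sq_Im by (simp del: csqrt.simps add: mult.commute)
  have "Re ?w \<ge> 0" by (rule Re_csqrt)
  with p show "Re ?w > 0" "Im ?w > 0"
    by (auto simp: zero_less_mult_iff simp del: csqrt.simps)
qed

lemma zp_sq: "zeta_plus A = (1 + csqrt (A+1))^2"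
  unfolding zeta_plus_def by (simp add: power2_eq_square algebra_simps, simp add: power2_eq_square[symmetric])
lemma zm_sq: "zeta_minus A = (1 - csqrt (A+1))^2"
  unfolding zeta_minus_def by (simp add: power2_eq_square algebra_simps, simp add: power2_eq_square[symmetric])

lemma csqrt_Q: "Re w > 0 \<Longrightarrow> csqrt (w^2 - 1 + 1) = w"
  by (simp add: csqrt_unique)

lemma key: "((a::real)^2 - b^2) - (1 - (2*a*b)^2/4) = (a^2 - 1) * (1 + b^2)"
  by (simp add: algebra_simps power2_eq_square)

lemma upper_nonpos: "Im A > 0 \<Longrightarrow> A + 1 \<notin> \<real>\<^sub>\<le>\<^sub>0"
  by (simp add: complex_nonpos_Reals_iff)

lemma hol_p: "zeta_plus holomorphic_on upper_hp"
  unfolding zeta_plus_def upper_hp_def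
  by (intro holomorphic_intros) (auto simp: complex_nonpos_Reals_iff)
lemma hol_m: "zeta_minus holomorphic_on upper_hp"
  unfolding zeta_minus_def upper_hp_def
  by (intro holomorphic_intros) (auto simp: complex_nonpos_Reals_iff)

lemma A_from_w: "A = (csqrt (A+1))^2 - 1" by simp

lemma inj_p: "inj_on zeta_plus upper_hp"
proof
  fix A B assume A: "A \<in> upper_hp" and B: "B \<in> upper_hp" and e: "zeta_plus A = zeta_plus B"
  have a: "Re (csqrt (A+1)) > 0" using A csqrt_upper unfolding upper_hp_def by auto
  have b: "Re (csqrt (B+1)) > 0" using B csqrt_upper unfolding upper_hp_def by auto
  from e have "1 + csqrt (A+1) = 1 + csqrt (B+1) \<or> 1 + csqrt (A+1) = - (1 + csqrt (B+1))"
    unfolding zp_sq power2_eq_iff .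
  moreover have "1 + csqrt (A+1) \<noteq> - (1 + csqrt (B+1))"
  proof
    assume "1 + csqrt (A+1) = - (1 + csqrt (B+1))"
    hence "Re (1 + csqrt (A+1)) = Re (- (1 + csqrt (B+1)))" by (rule arg_cong)
    thus False using a b by (simp only: plus_complex.sel uminus_complex.sel one_complex.sel)
  qed
  ultimately have "csqrt (A+1) = csqrt (B+1)" by simp
  then show "A = B" by (metis A_from_w)
qed

lemma inj_m: "inj_on zeta_minus upper_hp"
proof
  fix A B assume A: "A \<in> upper_hp" and B: "B \<in> upper_hp" and e: "zeta_minus A = zeta_minus B"
  have a: "Im (csqrt (A+1)) > 0" using A csqrt_upper unfolding upper_hp_def by auto
  have b: "Im (csqrt (B+1)) > 0" using B csqrt_upper unfolding upper_hp_def by auto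
  from e have "1 - csqrt (A+1) = 1 - csqrt (B+1) \<or> 1 - csqrt (A+1) = - (1 - csqrt (B+1))"
    unfolding zm_sq power2_eq_iff .
  moreover have "1 - csqrt (A+1) \<noteq> - (1 - csqrt (B+1))"
  proof
    assume "1 - csqrt (A+1) = - (1 - csqrt (B+1))"
    hence "Im (1 - csqrt (A+1)) = Im (- (1 - csqrt (B+1)))" by (rule arg_cong)
    thus False using a b by (simp only: minus_complex.sel uminus_complex.sel one_complex.sel)
  qed
  ultimately have "csqrt (A+1) = csqrt (B+1)" by simp
  then show "A = B" by (metis A_from_w)
qed

lemma csqrt_upper_closed: "Im z \<ge> 0 \<Longrightarrow> csqrt z = Complex (sqrt ((cmod z + Re z)/2)) (sqrt ((cmod z - Re z)/2))"
  by (simp add: complex_eq_iff)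

lemma cont_csqrt: "continuous_on {z. Im z \<ge> 0} csqrt"
proof -
  have "continuous_on {z. Im z \<ge> 0} (\<lambda>z. Complex (sqrt ((cmod z + Re z)/2)) (sqrt ((cmod z - Re z)/2)))"
    unfolding Complex_eq by (intro continuous_intros) auto
  then show ?thesis
    by (rule continuous_on_cong[THEN iffD1, rotated 2]) (auto simp: csqrt_upper_closed)
qed

lemma cont_sq: "continuous_on closed_upper_hp (\<lambda>A. csqrt (A+1))"
proof -
  have "continuous_on closed_upper_hp (\<lambda>A. A + 1)" by (intro continuous_intros)
  moreover have "(\<lambda>A. A + 1) ` closed_upper_hp \<subseteq> {z. Im z \<ge> 0}" by (auto simp: closed_upper_hp_def)
  ultimately show ?thesis using continuous_on_compose2[OF cont_csqrt] by blast
qed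

lemma cont_p: "continuous_on closed_upper_hp zeta_plus"
  unfolding zeta_plus_def by (intro continuous_intros cont_sq)
lemma cont_m: "continuous_on closed_upper_hp zeta_minus"
  unfolding zeta_minus_def by (intro continuous_intros cont_sq)

lemma keyu: "Re (u^2) - (1 - (Im (u^2))^2/4) = ((Re u)^2 - 1) * (1 + (Im u)^2)"
  unfolding sq_Re sq_Im by (rule key)

lemma img_p: "zeta_plus ` upper_hp = dom_plus"
proof safe
  fix A assume "A \<in> upper_hp"
  hence a: "Re (csqrt (A+1)) > 0" and b: "Im (csqrt (A+1)) > 0" using csqrt_upper unfolding upper_hp_def by auto
  define u where "u = 1 + csqrt (A+1)"
  have ua: "Re u > 1" and ub: "Im u > 0" using a b unfolding u_def by (simp_all del: csqrt.simps)
  have z: "zeta_plus A = u^2" unfolding u_def zp_sq ..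
  have "Im (u^2) > 0" unfolding sq_Im using ua ub by simp
  moreover have "((Re u)^2 - 1) * (1 + (Im u)^2) > 0"
    using one_less_power[OF ua, of 2] by (intro mult_pos_pos) (auto intro: add_pos_nonneg)
  hence "Re (u^2) > 1 - (Im (u^2))^2/4" using keyu[of u] by linarith
  ultimately show "zeta_plus A \<in> dom_plus" unfolding z dom_plus_def by simp
next
  fix z assume "z \<in> dom_plus"
  hence zi: "Im z > 0" and zr: "Re z > 1 - (Im z)^2/4" unfolding dom_plus_def by auto
  define c where "c = csqrt z"
  have cz: "c^2 = z" unfolding c_def by simp
  have c0: "Re c \<ge> 0" unfolding c_def by (rule Re_csqrt)
  have "Re c * Im c > 0" using zi unfolding cz[symmetric] sq_Im by (simp add: mult.commute)
  with c0 have ca: "Re c > 0" and cb: "Im c > 0" by (auto simp: zero_less_mult_iff)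
  have "((Re c)^2 - 1) * (1 + (Im c)^2) > 0" using keyu[of c] zr cz by simp
  moreover have "1 + (Im c)^2 > 0" by (simp add: add_pos_nonneg)
  ultimately have "(Re c)^2 - 1 > 0" by (rule zero_less_mult_pos2)
  hence "1^2 < (Re c)^2" by simp
  hence ca1: "Re c > 1" using ca power_less_imp_less_base[of 1 2 "Re c"] by simp
  define w where "w = c - 1"
  have wa: "Re w > 0" and wb: "Im w > 0" using ca1 cb unfolding w_def by auto
  define A where "A = w^2 - 1"
  have "Im A > 0" unfolding A_def using wa wb by (simp add: sq_Im)
  moreover have "csqrt (A + 1) = w" unfolding A_def using wa by (rule csqrt_Q)
  hence "zeta_plus A = z" unfolding zp_sq w_def using cz by simp
  ultimately show "z \<in> zeta_plus ` upper_hp" unfolding upper_hp_def by force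
qed

lemma img_m: "zeta_minus ` upper_hp = dom_minus"
proof safe
  fix A assume "A \<in> upper_hp"
  hence a: "Re (csqrt (A+1)) > 0" and b: "Im (csqrt (A+1)) > 0" using csqrt_upper unfolding upper_hp_def by auto
  define v where "v = 1 - csqrt (A+1)"
  have va: "Re v < 1" and vb: "Im v < 0" using a b unfolding v_def by (simp_all del: csqrt.simps)
  have z: "zeta_minus A = v^2" unfolding v_def zm_sq ..
  have nr: "v^2 \<notin> complex_of_real ` {0..}"
  proof
    assume "v^2 \<in> complex_of_real ` {0..}"
    hence i0: "Im (v^2) = 0" and r0: "Re (v^2) \<ge> 0" by (auto simp: ofreal_img)
    from i0 vb have "Re v = 0" unfolding sq_Im by simp
    with r0 vb show False unfolding sq_Re by (simp add: power2_eq_square) (metis mult_neg_neg not_le)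
  qed
  have np: "\<not> (Im (v^2) \<le> 0 \<and> Re (v^2) \<ge> 1 - (Im (v^2))^2/4)"
  proof
    assume h: "Im (v^2) \<le> 0 \<and> Re (v^2) \<ge> 1 - (Im (v^2))^2/4"
    hence "Re v * Im v \<le> 0" unfolding sq_Im by (simp add: mult.commute)
    with vb have a0: "Re v \<ge> 0" by (simp add: mult_le_0_iff)
    have "(Re v)^2 < 1^2" using a0 va by (intro power_strict_mono) auto
    hence "((Re v)^2 - 1) * (1 + (Im v)^2) < 0"
      by (intro mult_neg_pos) (auto intro: add_pos_nonneg)
    with h keyu[of v] show False by linarith
  qed
  show "zeta_minus A \<in> dom_minus" unfolding z dom_minus_def using nr np by auto
next
  fix z assume "z \<in> dom_minus"
  hence zr: "z \<notin> complex_of_real ` {0..}" and zp: "\<not> (Im z \<le> 0 \<and> Re z \<ge> 1 - (Im z)^2/4)"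
    unfolding dom_minus_def by auto
  define c where "c = csqrt z"
  have cz: "c^2 = z" unfolding c_def by simp
  have c0: "Re c \<ge> 0" unfolding c_def by (rule Re_csqrt)
  have ci: "Im c \<noteq> 0"
  proof
    assume "Im c = 0"
    hence "Im z = 0 \<and> Re z \<ge> 0" unfolding cz[symmetric] sq_Im sq_Re by simp
    with zr show False by (auto simp: ofreal_img)
  qed
  define v where "v = (if Im c < 0 then c else - c)"
  have vz: "v^2 = z" unfolding v_def using cz by simp
  have vb: "Im v < 0" unfolding v_def using ci by auto
  have va: "Re v < 1"
  proof (rule ccontr)
    assume "\<not> Re v < 1"
    hence va: "Re v \<ge> 1" by simp
    have "Im z \<le> 0" unfolding vz[symmetric] sq_Im using va vb
      by (simp add: mult_nonneg_nonpos)
    moreover have "1^2 \<le> (Re v)^2" using va by (intro power_mono) auto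
    hence "((Re v)^2 - 1) * (1 + (Im v)^2) \<ge> 0"
      by (intro mult_nonneg_nonneg) (auto intro: add_nonneg_nonneg)
    hence "Re z \<ge> 1 - (Im z)^2/4" using keyu[of v] vz by simp
    ultimately show False using zp by blast
  qed
  define w where "w = 1 - v"
  have wa: "Re w > 0" and wb: "Im w > 0" using va vb unfolding w_def by auto
  define A where "A = w^2 - 1"
  have "Im A > 0" unfolding A_def using wa wb by (simp add: sq_Im)
  moreover have "csqrt (A + 1) = w" unfolding A_def using wa by (rule csqrt_Q)
  hence "zeta_minus A = z" unfolding zm_sq w_def using vz by simp
  ultimately show "z \<in> zeta_minus ` upper_hp" unfolding upper_hp_def by force
qed

lemma tau_char: "z \<in> tau \<longleftrightarrow> Re z = 1 - (Im z)^2/4"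
proof
  assume "z \<in> tau"
  then obtain t where "z = 1 - (complex_of_real t)^2 + 2 * \<i> * complex_of_real t" unfolding tau_def by auto
  then show "Re z = 1 - (Im z)^2/4" by (simp add: power2_eq_square)
next
  assume h: "Re z = 1 - (Im z)^2/4"
  have "z = 1 - (complex_of_real (Im z/2))^2 + 2 * \<i> * complex_of_real (Im z/2)"
    using h by (simp add: complex_eq_iff power2_eq_square)
  then show "z \<in> tau" unfolding tau_def by blast
qed

lemma open_p: "open dom_plus"
  unfolding dom_plus_def by (intro open_Collect_conj open_Collect_less continuous_intros) auto

lemma closure_p: "closure dom_plus = {z. Im z \<ge> 0 \<and> Re z \<ge> 1 - (Im z)^2/4}" (is "_ = ?C")
proof
  have "closed ?C" by (intro closed_Collect_conj closed_Collect_le continuous_intros) auto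
  moreover have "dom_plus \<subseteq> ?C" by (auto simp: dom_plus_def)
  ultimately show "closure dom_plus \<subseteq> ?C" using closure_minimal by blast
  show "?C \<subseteq> closure dom_plus"
  proof
    fix z assume z: "z \<in> ?C"
    show "z \<in> closure dom_plus" unfolding closure_approachable
    proof (intro allI impI)
      fix e :: real assume e: "e > 0"
      define y where "y = z + complex_of_real (e/3) + \<i> * complex_of_real (e/3)"
      have "(Im z)^2 \<le> (Im z + e/3)^2" using z e by (intro power_mono) auto
      hence h: "(Im z)^2/4 \<le> (Im z + e/3)^2/4" by simp
      have ry: "Re y = Re z + e/3" and iy: "Im y = Im z + e/3" unfolding y_def by simp_all
      have z': "1 - (Im z)^2/4 \<le> Re z" using z by simp
      have "Re y > 1 - (Im y)^2/4" unfolding ry iy using h z' e by linarith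
      hence "y \<in> dom_plus" using z e iy unfolding dom_plus_def by simp
      moreover have "dist y z < e"
      proof -
        have "dist y z = cmod (complex_of_real (e/3) + \<i> * complex_of_real (e/3))"
          unfolding y_def dist_norm by (simp add: algebra_simps)
        also have "\<dots> \<le> cmod (complex_of_real (e/3)) + cmod (\<i> * complex_of_real (e/3))"
          by (rule norm_triangle_ineq)
        also have "\<dots> = 2 * e / 3" using e by (simp add: norm_mult)
        finally show ?thesis using e by simp
      qed
      ultimately show "\<exists>y\<in>dom_plus. dist y z < e" by blast
    qed
  qed
qed

lemma frontier_p: "frontier dom_plus = complex_of_real ` {1..} \<union> (tau \<inter> upper_hp)"
  unfolding frontier_def closure_p interior_open[OF open_p]
  by (auto simp: ofreal_img tau_char upper_hp_def dom_plus_def)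

lemma ray_closed: "closed (complex_of_real ` {0..})"
proof -
  have "complex_of_real ` {0..} = {z. Im z = 0 \<and> 0 \<le> Re z}" by (auto simp: ofreal_img)
  moreover have "closed {z. Im z = 0 \<and> 0 \<le> Re z}"
    by (intro closed_Collect_conj closed_Collect_eq closed_Collect_le continuous_intros)
  ultimately show ?thesis by simp
qed

lemma open_m: "open dom_minus"
  unfolding dom_minus_def
  by (intro open_Compl closed_Un ray_closed closed_Collect_conj closed_Collect_le continuous_intros) auto

lemma closure_m: "closure dom_minus = - {z. Im z < 0 \<and> Re z > 1 - (Im z)^2/4}" (is "_ = - ?I")
proof
  have "open ?I" by (intro open_Collect_conj open_Collect_less continuous_intros) auto
  hence "closed (- ?I)" by (rule closed_Compl)
  moreover have "dom_minus \<subseteq> - ?I" by (auto simp: dom_minus_def)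
  ultimately show "closure dom_minus \<subseteq> - ?I" using closure_minimal by blast
  show "- ?I \<subseteq> closure dom_minus"
  proof
    fix z assume z: "z \<in> - ?I"
    show "z \<in> closure dom_minus" unfolding closure_approachable
    proof (intro allI impI)
      fix e :: real assume e: "e > 0"
      show "\<exists>y\<in>dom_minus. dist y z < e"
      proof (cases "Im z \<ge> 0")
        case True
        define y where "y = z + \<i> * complex_of_real (e/2)"
        have "y \<in> dom_minus" using True e unfolding y_def dom_minus_def by (auto simp: ofreal_img)
        moreover have "dist y z < e" unfolding y_def dist_norm using e by (simp add: norm_mult)
        ultimately show ?thesis by blast
      next
        case False
        define y where "y = z - complex_of_real (e/2)"
        have "y \<in> dom_minus" using False z e unfolding y_def dom_minus_def by (auto simp: ofreal_img)
        moreover have "dist y z < e" unfolding y_def dist_norm using e by simp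
        ultimately show ?thesis by blast
      qed
    qed
  qed
qed

lemma frontier_m: "frontier dom_minus = complex_of_real ` {0..} \<union> (tau \<inter> lower_hp)"
  unfolding frontier_def closure_m interior_open[OF open_m]
  by (auto simp: ofreal_img tau_char lower_hp_def dom_minus_def)

lemma csqrt_real_pos: "x \<ge> -1 \<Longrightarrow> csqrt (complex_of_real x + 1) = complex_of_real (sqrt (x+1))"
  using csqrt_of_real[of "x+1"] by simp

lemma csqrt_real_neg: "x < -1 \<Longrightarrow> csqrt (complex_of_real x + 1) = \<i> * complex_of_real (sqrt (-x-1))"
  using csqrt_of_real'[of "x+1"] by (simp add: mult.commute)

lemma zp_real_pos: "x \<ge> -1 \<Longrightarrow> zeta_plus (complex_of_real x) = complex_of_real (x + 2 + 2 * sqrt (x+1))"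
  unfolding zeta_plus_def by (simp add: csqrt_real_pos del: csqrt.simps)
lemma zm_real_pos: "x \<ge> -1 \<Longrightarrow> zeta_minus (complex_of_real x) = complex_of_real (x + 2 - 2 * sqrt (x+1))"
  unfolding zeta_minus_def by (simp add: csqrt_real_pos del: csqrt.simps)
lemma zp_real_neg: "x < -1 \<Longrightarrow> Re (zeta_plus (complex_of_real x)) = x + 2 \<and> Im (zeta_plus (complex_of_real x)) = 2 * sqrt (-x-1)"
  unfolding zeta_plus_def by (simp add: csqrt_real_neg del: csqrt.simps)
lemma zm_real_neg: "x < -1 \<Longrightarrow> Re (zeta_minus (complex_of_real x)) = x + 2 \<and> Im (zeta_minus (complex_of_real x)) = - 2 * sqrt (-x-1)"
  unfolding zeta_minus_def by (simp add: csqrt_real_neg del: csqrt.simps)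

lemma bp1: "zeta_plus ` (complex_of_real ` {-1..}) = complex_of_real ` {1..}"
proof safe
  fix x :: real assume x: "-1 \<le> x"
  have x': "x \<ge> -1" using x by simp
  have "sqrt (x+1) \<ge> 0" using x by simp
  hence "x + 2 + 2 * sqrt (x+1) \<ge> 1" using x' by linarith
  moreover have "zeta_plus (complex_of_real x) = complex_of_real (x + 2 + 2 * sqrt (x+1))"
    using x' by (rule zp_real_pos)
  ultimately show "zeta_plus (complex_of_real x) \<in> complex_of_real ` {1..}" by (simp only:) (rule imageI, simp)
next
  fix y :: real assume y: "1 \<le> y"
  define x where "x = (sqrt y - 1)^2 - 1"
  have sy: "sqrt y \<ge> 1" using y by simp
  have x1: "x \<ge> -1" unfolding x_def by simp
  have "sqrt (x+1) = sqrt y - 1" unfolding x_def using sy by simp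
  hence "x + 2 + 2 * sqrt (x+1) = y" unfolding x_def using y
    by (simp add: power2_eq_square algebra_simps)
  hence "complex_of_real y = zeta_plus (complex_of_real x)" using x1 by (simp add: zp_real_pos)
  then show "complex_of_real y \<in> zeta_plus ` complex_of_real ` {-1..}" using x1 by force
qed

lemma bp2: "zeta_plus ` (complex_of_real ` {..<-1}) = tau \<inter> upper_hp"
proof safe
  fix x :: real assume x: "x < -1"
  have s: "(sqrt (-x-1))^2 = -x-1" using x by simp
  show "zeta_plus (complex_of_real x) \<in> tau" unfolding tau_char using zp_real_neg[of x] x s
    by (auto simp: power_mult_distrib field_simps)
  show "zeta_plus (complex_of_real x) \<in> upper_hp" unfolding upper_hp_def using zp_real_neg[of x] x by simp
next
  fix z assume z: "z \<in> tau" "z \<in> upper_hp"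
  define t where "t = Im z / 2"
  have t: "t > 0" using z unfolding t_def upper_hp_def by simp
  define x where "x = -1 - t^2"
  have x: "x < -1" unfolding x_def using t by simp
  have "sqrt (-x-1) = t" unfolding x_def using t by simp
  hence "z = zeta_plus (complex_of_real x)" using zp_real_neg[OF x] z(1) unfolding tau_char
    by (simp add: complex_eq_iff x_def t_def power2_eq_square)
  then show "z \<in> zeta_plus ` complex_of_real ` {..<-1}" using x by force
qed

lemma bm1: "zeta_minus ` (complex_of_real ` {0<..}) = complex_of_real ` {0<..}"
proof safe
  fix x :: real assume x: "0 < x"
  have s1: "sqrt (x+1) > 1" using x by simp
  have "x + 2 - 2 * sqrt (x+1) = (sqrt (x+1) - 1)^2" using x by (simp add: power2_eq_square algebra_simps)
  moreover have "(sqrt (x+1) - 1)^2 > 0" using s1 by simp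
  ultimately have r: "x + 2 - 2 * sqrt (x+1) > 0" by simp
  have "zeta_minus (complex_of_real x) = complex_of_real (x + 2 - 2 * sqrt (x+1))"
    using x by (intro zm_real_pos) simp
  then show "zeta_minus (complex_of_real x) \<in> complex_of_real ` {0<..}" by (simp only:) (rule imageI, use r in simp)
next
  fix y :: real assume y: "0 < y"
  define x where "x = (1 + sqrt y)^2 - 1"
  have sy: "sqrt y > 0" using y by simp
  have "(1 + sqrt y)^2 > 1^2" using sy by (intro power_strict_mono) auto
  hence x1: "x > 0" unfolding x_def by simp
  have "sqrt (x+1) = 1 + sqrt y" unfolding x_def using sy by simp
  hence "x + 2 - 2 * sqrt (x+1) = y" unfolding x_def using y
    by (simp add: power2_eq_square algebra_simps)
  hence "complex_of_real y = zeta_minus (complex_of_real x)" using x1 by (simp add: zm_real_pos)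
  then show "complex_of_real y \<in> zeta_minus ` complex_of_real ` {0<..}" using x1 by force
qed

lemma bm2: "zeta_minus ` (complex_of_real ` {-1..0}) = complex_of_real ` {0..1}"
proof safe
  fix x :: real assume x: "x \<in> {-1..0}"
  have s1: "sqrt (x+1) \<le> 1" "sqrt (x+1) \<ge> 0" using x by auto
  have "x + 2 - 2 * sqrt (x+1) = (1 - sqrt (x+1))^2" using x by (simp add: power2_eq_square algebra_simps)
  moreover have "(1 - sqrt (x+1))^2 \<le> 1" using s1 by (simp add: power_le_one)
  moreover have "(1 - sqrt (x+1))^2 \<ge> 0" by simp
  ultimately have r: "x + 2 - 2 * sqrt (x+1) \<in> {0..1}" by simp
  have "zeta_minus (complex_of_real x) = complex_of_real (x + 2 - 2 * sqrt (x+1))"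
    using x by (intro zm_real_pos) simp
  then show "zeta_minus (complex_of_real x) \<in> complex_of_real ` {0..1}" by (simp only:) (rule imageI, use r in simp)
next
  fix y :: real assume y: "y \<in> {0..1}"
  define s where "s = 1 - sqrt y"
  have s: "s \<ge> 0" "s \<le> 1" unfolding s_def using y by auto
  define x where "x = s^2 - 1"
  have x1: "x \<in> {-1..0}" unfolding x_def using s by (auto simp: power_le_one)
  have "sqrt (x+1) = s" unfolding x_def using s by simp
  hence "x + 2 - 2 * sqrt (x+1) = y" unfolding x_def s_def using y
    by (simp add: power2_eq_square algebra_simps)
  hence "complex_of_real y = zeta_minus (complex_of_real x)" using x1 by (simp add: zm_real_pos)
  then show "complex_of_real y \<in> zeta_minus ` complex_of_real ` {-1..0}" using x1 by force
qed

lemma bm3: "zeta_minus ` (complex_of_real ` {..<-1}) = tau \<inter> lower_hp"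
proof safe
  fix x :: real assume x: "x < -1"
  have s: "(sqrt (-x-1))^2 = -x-1" using x by simp
  show "zeta_minus (complex_of_real x) \<in> tau" unfolding tau_char using zm_real_neg[of x] x s
    by (auto simp: power_mult_distrib field_simps)
  show "zeta_minus (complex_of_real x) \<in> lower_hp" unfolding lower_hp_def using zm_real_neg[of x] x by simp
next
  fix z assume z: "z \<in> tau" "z \<in> lower_hp"
  define t where "t = - Im z / 2"
  have t: "t > 0" using z unfolding t_def lower_hp_def by simp
  define x where "x = -1 - t^2"
  have x: "x < -1" unfolding x_def using t by simp
  have "sqrt (-x-1) = t" unfolding x_def using t by simp
  hence "z = zeta_minus (complex_of_real x)" using zm_real_neg[OF x] z(1) unfolding tau_char
    by (simp add: complex_eq_iff x_def t_def power2_eq_square)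
  then show "z \<in> zeta_minus ` complex_of_real ` {..<-1}" using x by force
qed

lemma preim: "{A \<in> upper_hp. zeta_minus A \<in> complex_of_real ` {..<0}} =
       (\<lambda>t::real. 2 * \<i> * complex_of_real t - (complex_of_real t)^2) ` {0..} \<inter> upper_hp"
proof (intro equalityI subsetI)
  fix A assume "A \<in> {A \<in> upper_hp. zeta_minus A \<in> complex_of_real ` {..<0}}"
  hence A: "A \<in> upper_hp" and zA: "zeta_minus A \<in> complex_of_real ` {..<0}" by auto
  define w where "w = csqrt (A+1)"
  have a: "Re w > 0" and b: "Im w > 0" using A csqrt_upper unfolding upper_hp_def w_def by auto
  have "Im ((1 - w)^2) = 0" using zA unfolding zm_sq w_def[symmetric] by (auto simp: ofreal_img)
  hence "(1 - Re w) * Im w = 0" unfolding sq_Im by simp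
  hence a1: "Re w = 1" using b by simp
  have Aw: "A = w^2 - 1" unfolding w_def by simp
  have "A = 2 * \<i> * complex_of_real (Im w) - (complex_of_real (Im w))^2"
    unfolding complex_eq_iff using Aw a1 by (simp add: sq_Re sq_Im power2_eq_square)
  then show "A \<in> (\<lambda>t::real. 2 * \<i> * complex_of_real t - (complex_of_real t)^2) ` {0..} \<inter> upper_hp"
    using b A by force
next
  fix A assume "A \<in> (\<lambda>t::real. 2 * \<i> * complex_of_real t - (complex_of_real t)^2) ` {0..} \<inter> upper_hp"
  then obtain t where t: "0 \<le> t" and Ad: "A = 2 * \<i> * complex_of_real t - (complex_of_real t)^2"
    and A: "A \<in> upper_hp" by auto
  have tp: "t > 0" using A unfolding upper_hp_def Ad by simp
  define w where "w = 1 + \<i> * complex_of_real t"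
  have Aw: "A = w^2 - 1"
    unfolding w_def Ad by (simp add: power2_eq_square algebra_simps)
  have "csqrt (w^2 - 1 + 1) = w" by (rule csqrt_Q) (simp add: w_def)
  hence cw: "csqrt (A + 1) = w" unfolding Aw .
  have "zeta_minus A = complex_of_real (-(t^2))"
    unfolding zm_sq cw by (simp add: w_def complex_eq_iff power2_eq_square)
  then show "A \<in> {A \<in> upper_hp. zeta_minus A \<in> complex_of_real ` {..<0}}"
    using tp A by (simp add: ofreal_img power2_eq_square)
qed


theorem lemma2p2:
  shows
  \<comment> \<open>(1)\<close>
  "(zeta_plus holomorphic_on upper_hp \<and> inj_on zeta_plus upper_hp \<and>
     zeta_plus ` upper_hp = dom_plus \<and>
     open dom_plus \<and> connected dom_plus \<and> dom_plus \<subseteq> upper_hp \<and>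
     frontier dom_plus = complex_of_real ` {1..} \<union> (tau \<inter> upper_hp) \<and>
     continuous_on closed_upper_hp zeta_plus \<and>
     zeta_plus ` (complex_of_real ` {-1..}) = complex_of_real ` {1..} \<and>
     zeta_plus ` (complex_of_real ` {..<-1}) = tau \<inter> upper_hp)
   \<and>
  \<comment> \<open>(2)\<close>
   (zeta_minus holomorphic_on upper_hp \<and> inj_on zeta_minus upper_hp \<and>
     zeta_minus ` upper_hp = dom_minus \<and>
     open dom_minus \<and> connected dom_minus \<and>
     frontier dom_minus = complex_of_real ` {0..} \<union> (tau \<inter> lower_hp) \<and>
     continuous_on closed_upper_hp zeta_minus \<and>
     zeta_minus ` (complex_of_real ` {0<..}) = complex_of_real ` {0<..} \<and>
     zeta_minus ` (complex_of_real ` {-1..0}) = complex_of_real ` {0..1} \<and>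
     zeta_minus ` (complex_of_real ` {..<-1}) = tau \<inter> lower_hp \<and>
     {A \<in> upper_hp. zeta_minus A \<in> complex_of_real ` {..<0}} =
       (\<lambda>t::real. 2 * \<i> * complex_of_real t - (complex_of_real t)^2) ` {0..} \<inter> upper_hp)"
proof -
  have cu: "connected upper_hp" unfolding upper_hp_def by (rule connected_halfspace_Im_gt)
  have c1: "connected dom_plus"
    using connected_continuous_image[OF holomorphic_on_imp_continuous_on[OF hol_p] cu] img_p by simp
  have c2: "connected dom_minus"
    using connected_continuous_image[OF holomorphic_on_imp_continuous_on[OF hol_m] cu] img_m by simp
  have s: "dom_plus \<subseteq> upper_hp" by (auto simp: dom_plus_def upper_hp_def)
  show ?thesis
    using hol_p inj_p img_p open_p c1 s frontier_p cont_p bp1 bp2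
      hol_m inj_m img_m open_m c2 frontier_m cont_m bm1 bm2 bm3 preim
    by blast
qed

end
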